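(* Let $G$ be a hypo-efficient domination graph of order $n$. Then $G$ is connected, $n\geq 4$, and $2\leq\gamma(G)\leq n/2$. Furthermore, $\gamma(G)=n/2$ if and only if $G=C_4$.
   Context: All graphs are finite, simple and undirected. For $v\in V(G)$, $N[v]$ is the closed neighborhood of $v$. A set $D\subseteq V(G)$ is dominating if every vertex of $G$ not in $D$ has a neighbor in $D$; $\gamma(G)$ is the minimum size of a dominating set. A set $D\subseteq V(G)$ is an efficient dominating set (EDS) if $|N[v]\cap D|=1$ for every $v\in V(G)$. $G$ is a hypo-efficient domination graph if $G$ has no EDS but $G-v$ has at least one EDS for every $v\in V(G)$. *)

theory Defs
  imports Main
begin

definition simple_graph :: "'a set \<Rightarrow> ('a \<Rightarrow> 'a \<Rightarrow> bool) \<Rightarrow> bool" where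
  "simple_graph V E \<longleftrightarrow> finite V \<and> (\<forall>x y. E x y \<longrightarrow> x \<in> V \<and> y \<in> V)
     \<and> (\<forall>x y. E x y \<longrightarrow> E y x) \<and> (\<forall>x. \<not> E x x)"

definition closed_nbhd :: "'a set \<Rightarrow> ('a \<Rightarrow> 'a \<Rightarrow> bool) \<Rightarrow> 'a \<Rightarrow> 'a set" where
  "closed_nbhd V E v = {u \<in> V. u = v \<or> E v u}"

definition dominating :: "'a set \<Rightarrow> ('a \<Rightarrow> 'a \<Rightarrow> bool) \<Rightarrow> 'a set \<Rightarrow> bool" where
  "dominating V E D \<longleftrightarrow> D \<subseteq> V \<and> (\<forall>v \<in> V - D. \<exists>u \<in> D. E v u)"

definition domination_number :: "'a set \<Rightarrow> ('a \<Rightarrow> 'a \<Rightarrow> bool) \<Rightarrow> nat" where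
  "domination_number V E = Min {card D | D. dominating V E D}"

definition efficient_dominating :: "'a set \<Rightarrow> ('a \<Rightarrow> 'a \<Rightarrow> bool) \<Rightarrow> 'a set \<Rightarrow> bool" where
  "efficient_dominating V E D \<longleftrightarrow> D \<subseteq> V \<and> (\<forall>v \<in> V. card (closed_nbhd V E v \<inter> D) = 1)"

definition has_EDS :: "'a set \<Rightarrow> ('a \<Rightarrow> 'a \<Rightarrow> bool) \<Rightarrow> bool" where
  "has_EDS V E \<longleftrightarrow> (\<exists>D. efficient_dominating V E D)"

definition del_edges :: "('a \<Rightarrow> 'a \<Rightarrow> bool) \<Rightarrow> 'a \<Rightarrow> 'a \<Rightarrow> 'a \<Rightarrow> bool" where
  "del_edges E v = (\<lambda>x y. E x y \<and> x \<noteq> v \<and> y \<noteq> v)"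

definition hypo_efficient :: "'a set \<Rightarrow> ('a \<Rightarrow> 'a \<Rightarrow> bool) \<Rightarrow> bool" where
  "hypo_efficient V E \<longleftrightarrow> \<not> has_EDS V E \<and> (\<forall>v \<in> V. has_EDS (V - {v}) (del_edges E v))"

definition connected_graph :: "'a set \<Rightarrow> ('a \<Rightarrow> 'a \<Rightarrow> bool) \<Rightarrow> bool" where
  "connected_graph V E \<longleftrightarrow> V \<noteq> {} \<and> (\<forall>x \<in> V. \<forall>y \<in> V. E\<^sup>*\<^sup>* x y)"

definition is_C4 :: "'a set \<Rightarrow> ('a \<Rightarrow> 'a \<Rightarrow> bool) \<Rightarrow> bool" where
  "is_C4 V E \<longleftrightarrow> (\<exists>a b c d. distinct [a, b, c, d] \<and> V = {a, b, c, d} \<and>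
     (\<forall>x y. E x y \<longleftrightarrow> {x, y} \<in> {{a, b}, {b, c}, {c, d}, {d, a}}))"

end

theory Submission
  imports Defs
begin

lemma cn_del: "u \<noteq> v \<Longrightarrow> closed_nbhd (V - {v}) (del_edges E v) u = closed_nbhd V E u - {v}"
  unfolding closed_nbhd_def del_edges_def by auto

lemma cn_sub: "closed_nbhd V E u \<subseteq> V" unfolding closed_nbhd_def by auto

lemma cn_self: "u \<in> V \<Longrightarrow> u \<in> closed_nbhd V E u" unfolding closed_nbhd_def by auto

lemma cn_mem: "w \<in> closed_nbhd V E u \<longleftrightarrow> w \<in> V \<and> (w = u \<or> E u w)"
  unfolding closed_nbhd_def by auto

lemma eds_owner:
  assumes "efficient_dominating V E D" "x \<in> V"
  shows "\<exists>d. closed_nbhd V E x \<inter> D = {d}"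
  using assms unfolding efficient_dominating_def by (auto simp: card_1_singleton_iff)

lemma eds_self:
  assumes "efficient_dominating V E D" "d \<in> D"
  shows "closed_nbhd V E d \<inter> D = {d}"
proof -
  have dV: "d \<in> V" using assms unfolding efficient_dominating_def by auto
  obtain e where e: "closed_nbhd V E d \<inter> D = {e}" using eds_owner[OF assms(1) dV] by auto
  have "d \<in> closed_nbhd V E d \<inter> D" using cn_self[OF dV] assms(2) by auto
  then show ?thesis using e by auto
qed

lemma efficient_partition:
  assumes fin: "finite V" and sym: "\<And>x y. E x y \<Longrightarrow> E y x"
    and ed: "efficient_dominating V E D"
  shows "(\<Sum>d\<in>D. card (closed_nbhd V E d)) = card V"
proof -
  have DV: "D \<subseteq> V" using ed unfolding efficient_dominating_def by auto
  have finD: "finite D" using DV fin finite_subset by auto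
  have mem: "x \<in> closed_nbhd V E d \<longleftrightarrow> d \<in> closed_nbhd V E x" if "x \<in> V" "d \<in> V" for x d
    using that sym unfolding closed_nbhd_def by auto
  have un: "(\<Union>d\<in>D. closed_nbhd V E d) = V"
  proof
    show "(\<Union>d\<in>D. closed_nbhd V E d) \<subseteq> V" using cn_sub by fast
    show "V \<subseteq> (\<Union>d\<in>D. closed_nbhd V E d)"
    proof
      fix x assume x: "x \<in> V"
      then obtain d where "closed_nbhd V E x \<inter> D = {d}" using eds_owner[OF ed] by blast
      then have "d \<in> D" "d \<in> closed_nbhd V E x" by auto
      then show "x \<in> (\<Union>d\<in>D. closed_nbhd V E d)" using mem x DV by blast
    qed
  qed
  have disj: "closed_nbhd V E d1 \<inter> closed_nbhd V E d2 = {}" if "d1 \<in> D" "d2 \<in> D" "d1 \<noteq> d2" for d1 d2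
  proof (rule ccontr)
    assume "closed_nbhd V E d1 \<inter> closed_nbhd V E d2 \<noteq> {}"
    then obtain x where x: "x \<in> closed_nbhd V E d1" "x \<in> closed_nbhd V E d2" by auto
    then have xV: "x \<in> V" using cn_sub by fast
    obtain e where e: "closed_nbhd V E x \<inter> D = {e}" using eds_owner[OF ed xV] by blast
    have "d1 \<in> closed_nbhd V E x \<inter> D" "d2 \<in> closed_nbhd V E x \<inter> D" using x mem xV DV that by auto
    then show False using e that by auto
  qed
  have "card V = card (\<Union>d\<in>D. closed_nbhd V E d)" using un by simp
  also have "\<dots> = (\<Sum>d\<in>D. card (closed_nbhd V E d))"
    by (rule card_UN_disjoint) (use finD disj in \<open>auto intro: finite_subset[OF cn_sub fin]\<close>)
  finally show ?thesis by simp
qed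

locale hg =
  fixes V :: "'a set" and E :: "'a \<Rightarrow> 'a \<Rightarrow> bool"
  assumes sg: "simple_graph V E" and he: "hypo_efficient V E"
begin

abbreviation "N \<equiv> closed_nbhd V E"

lemma fin: "finite V" using sg unfolding simple_graph_def by auto
lemma sym: "E x y \<Longrightarrow> E y x" using sg unfolding simple_graph_def by auto
lemma inV: "E x y \<Longrightarrow> x \<in> V" "E x y \<Longrightarrow> y \<in> V" using sg unfolding simple_graph_def by auto
lemma irr: "\<not> E x x" using sg unfolding simple_graph_def by auto
lemma noEDS: "\<not> efficient_dominating V E D" using he unfolding hypo_efficient_def has_EDS_def by auto
lemma delEDS: "v \<in> V \<Longrightarrow> \<exists>D. efficient_dominating (V-{v}) (del_edges E v) D"
  using he unfolding hypo_efficient_def has_EDS_def by auto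
lemma del_sym: "del_edges E v x y \<Longrightarrow> del_edges E v y x"
  unfolding del_edges_def using sym by auto

lemma del_partition:
  assumes "efficient_dominating (V-{v}) (del_edges E v) D"
  shows "(\<Sum>d\<in>D. card (closed_nbhd (V-{v}) (del_edges E v) d)) = card (V - {v})"
  by (rule efficient_partition[OF _ _ assms]) (use fin del_sym in auto)

lemma lift:
  assumes v: "v \<in> V" and D: "efficient_dominating (V-{v}) (del_edges E v) D"
    and c: "card (N v \<inter> D) = 1"
  shows False
proof -
  have DV: "D \<subseteq> V - {v}" using D unfolding efficient_dominating_def by auto
  have "efficient_dominating V E D"
    unfolding efficient_dominating_def
  proof (intro conjI ballI)
    show "D \<subseteq> V" using DV by auto
    fix u assume u: "u \<in> V"
    show "card (N u \<inter> D) = 1"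
    proof (cases "u = v")
      case True then show ?thesis using c by simp
    next
      case False
      have "N u \<inter> D = closed_nbhd (V-{v}) (del_edges E v) u \<inter> D"
        using cn_del[OF False] DV by auto
      then show ?thesis using D u False unfolding efficient_dominating_def by auto
    qed
  qed
  then show False using noEDS by blast
qed

lemma nonempty: "V \<noteq> {}"
proof
  assume "V = {}"
  then have "efficient_dominating V E {}" unfolding efficient_dominating_def by auto
  then show False using noEDS by blast
qed

lemma no_isolated: "x \<in> V \<Longrightarrow> \<exists>u. E x u"
proof (rule ccontr)
  assume x: "x \<in> V" and nx: "\<not> (\<exists>u. E x u)"
  obtain D where D: "efficient_dominating (V-{x}) (del_edges E x) D" using delEDS[OF x] by blast
  have DV: "D \<subseteq> V - {x}" using D unfolding efficient_dominating_def by auto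
  have "efficient_dominating V E (insert x D)"
    unfolding efficient_dominating_def
  proof (intro conjI ballI)
    show "insert x D \<subseteq> V" using DV x by auto
    fix y assume y: "y \<in> V"
    show "card (N y \<inter> insert x D) = 1"
    proof (cases "y = x")
      case True
      have "N y \<inter> insert x D = {x}" using True nx x DV unfolding closed_nbhd_def by auto
      then show ?thesis by simp
    next
      case False
      have xn: "x \<notin> N y" using False nx sym unfolding closed_nbhd_def by blast
      have "N y \<inter> insert x D = closed_nbhd (V-{x}) (del_edges E x) y \<inter> D"
        using cn_del[OF False, of V E] DV xn by auto
      then show ?thesis using D y False unfolding efficient_dominating_def by auto
    qed
  qed
  then show False using noEDS by blast
qed

lemma no_universal: "u \<in> V \<Longrightarrow> \<exists>w\<in>V. w \<noteq> u \<and> \<not> E u w"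
proof (rule ccontr)
  assume u: "u \<in> V" and nu: "\<not> (\<exists>w\<in>V. w \<noteq> u \<and> \<not> E u w)"
  have "efficient_dominating V E {u}"
    unfolding efficient_dominating_def
  proof (intro conjI ballI)
    show "{u} \<subseteq> V" using u by auto
    fix y assume y: "y \<in> V"
    have "N y \<inter> {u} = {u}" using y u nu sym unfolding closed_nbhd_def by auto
    then show "card (N y \<inter> {u}) = 1" by simp
  qed
  then show False using noEDS by blast
qed

lemma gamma_le: "dominating V E S \<Longrightarrow> domination_number V E \<le> card S"
proof -
  assume S: "dominating V E S"
  have "{card D | D. dominating V E D} \<subseteq> card ` Pow V"
    unfolding dominating_def by auto
  then have "finite {card D | D. dominating V E D}" using fin finite_subset by blast
  then show ?thesis unfolding domination_number_def using S by (auto intro: Min_le)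
qed

lemma gamma_obtain: "\<exists>D. dominating V E D \<and> card D = domination_number V E"
proof -
  have "{card D | D. dominating V E D} \<subseteq> card ` Pow V"
    unfolding dominating_def by auto
  then have f: "finite {card D | D. dominating V E D}" using fin finite_subset by blast
  have "dominating V E V" unfolding dominating_def by auto
  then have ne: "{card D | D. dominating V E D} \<noteq> {}" by auto
  show ?thesis using Min_in[OF f ne] unfolding domination_number_def by auto
qed

end

context hg begin

lemma connected: "connected_graph V E"
  unfolding connected_graph_def
proof (intro conjI ballI)
  show "V \<noteq> {}" by (rule nonempty)
  fix x y assume x: "x \<in> V" and y: "y \<in> V"
  show "E\<^sup>*\<^sup>* x y"
  proof (rule ccontr)
    assume nxy: "\<not> E\<^sup>*\<^sup>* x y"
    define C where "C = {w \<in> V. E\<^sup>*\<^sup>* x w}"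
    have xC: "x \<in> C" using x C_def by auto
    have yC: "y \<notin> C" using nxy C_def by auto
    have closed: "w \<in> C \<longleftrightarrow> u \<in> C" if "E u w" for u w
    proof
      assume "w \<in> C" then show "u \<in> C" using that sym[OF that] inV C_def
        by (auto intro: rtranclp.rtrancl_into_rtrancl)
    next
      assume "u \<in> C" then show "w \<in> C" using that inV C_def
        by (auto intro: rtranclp.rtrancl_into_rtrancl)
    qed
    obtain Dy where Dy: "efficient_dominating (V-{y}) (del_edges E y) Dy" using delEDS[OF y] by blast
    obtain Dx where Dx: "efficient_dominating (V-{x}) (del_edges E x) Dx" using delEDS[OF x] by blast
    define D where "D = (Dy \<inter> C) \<union> (Dx - C)"
    have "efficient_dominating V E D"
      unfolding efficient_dominating_def
    proof (intro conjI ballI)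
      show "D \<subseteq> V" using Dx Dy unfolding D_def efficient_dominating_def by auto
      fix u assume u: "u \<in> V"
      show "card (N u \<inter> D) = 1"
      proof (cases "u \<in> C")
        case True
        have uy: "u \<noteq> y" using True yC by auto
        have sub: "N u \<subseteq> C" using True closed unfolding closed_nbhd_def by auto
        have "N u \<inter> D = closed_nbhd (V-{y}) (del_edges E y) u \<inter> Dy"
          using cn_del[OF uy, of V E] sub yC unfolding D_def by auto
        then show ?thesis using Dy u uy unfolding efficient_dominating_def by auto
      next
        case False
        have ux: "u \<noteq> x" using False xC by auto
        have sub: "N u \<inter> C = {}" using False closed unfolding closed_nbhd_def by auto
        have "N u \<inter> D = closed_nbhd (V-{x}) (del_edges E x) u \<inter> Dx"
          using cn_del[OF ux, of V E] sub xC unfolding D_def by auto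
        then show ?thesis using Dx u ux unfolding efficient_dominating_def by auto
      qed
    qed
    then show False using noEDS by blast
  qed
qed

lemma card4: "card V \<ge> 4"
proof (rule ccontr)
  assume c: "\<not> card V \<ge> 4"
  obtain x where x: "x \<in> V" using nonempty by auto
  obtain y where y: "E x y" using no_isolated[OF x] by auto
  obtain z where z: "z \<in> V" "z \<noteq> x" "\<not> E x z" using no_universal[OF x] by auto
  have yV: "y \<in> V" using inV y by auto
  have d: "x \<noteq> y" "y \<noteq> z" using y z irr by auto
  have "card {x,y,z} = 3" using d z by auto
  moreover have "{x,y,z} \<subseteq> V" using x yV z by auto
  moreover have "card V \<le> 3" using c by auto
  ultimately have V: "V = {x,y,z}" using fin by (metis card_seteq)
  obtain w where w: "w \<in> V" "w \<noteq> y" "\<not> E y w" using no_universal[OF yV] by auto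
  have "w = z" using w V sym[OF y] by auto
  obtain u where u: "E z u" using no_isolated[OF z(1)] by auto
  have "u \<in> V" using inV u by auto
  then show False using u V w \<open>w = z\<close> z irr sym by auto
qed

lemma gamma_ge2: "2 \<le> domination_number V E"
proof -
  obtain D where D: "dominating V E D" "card D = domination_number V E" using gamma_obtain by blast
  have DV: "D \<subseteq> V" using D unfolding dominating_def by auto
  have "card D \<noteq> 0"
  proof
    assume "card D = 0"
    then have "D = {}" using DV fin by (meson card_0_eq finite_subset)
    then show False using D nonempty unfolding dominating_def by auto
  qed
  moreover have "card D \<noteq> 1"
  proof
    assume "card D = 1"
    then obtain u where u: "D = {u}" by (auto simp: card_1_singleton_iff)
    have uV: "u \<in> V" using u DV by auto
    obtain w where "w \<in> V" "w \<noteq> u" "\<not> E u w" using no_universal[OF uV] by auto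
    then show False using D u sym unfolding dominating_def by auto
  qed
  ultimately show ?thesis using D by auto
qed

lemma ore: "2 * domination_number V E \<le> card V"
proof -
  obtain D where D: "dominating V E D" "card D = domination_number V E" using gamma_obtain by blast
  have DV: "D \<subseteq> V" using D unfolding dominating_def by auto
  have finD: "finite D" using DV fin finite_subset by auto
  have "dominating V E (V - D)"
    unfolding dominating_def
  proof (intro conjI ballI)
    show "V - D \<subseteq> V" by auto
    fix u assume "u \<in> V - (V - D)"
    then have uD: "u \<in> D" and uV: "u \<in> V" using DV by auto
    show "\<exists>w\<in>V - D. E u w"
    proof (rule ccontr)
      assume nn: "\<not> (\<exists>w\<in>V - D. E u w)"
      obtain w0 where w0: "E u w0" using no_isolated[OF uV] by auto
      have w0D: "w0 \<in> D - {u}" using w0 nn inV irr by auto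
      have "dominating V E (D - {u})"
        unfolding dominating_def
      proof (intro conjI ballI)
        show "D - {u} \<subseteq> V" using DV by auto
        fix z assume z: "z \<in> V - (D - {u})"
        show "\<exists>d\<in>D - {u}. E z d"
        proof (cases "z = u")
          case True then show ?thesis using w0 w0D by auto
        next
          case False
          then have "z \<in> V - D" using z by auto
          then obtain d where d: "d \<in> D" "E z d" using D unfolding dominating_def by auto
          have "d \<noteq> u" using d nn sym \<open>z \<in> V - D\<close> by auto
          then show ?thesis using d by auto
        qed
      qed
      then have "domination_number V E \<le> card (D - {u})" by (rule gamma_le)
      then show False using D uD finD
        by (metis card_Diff1_less not_le)
    qed
  qed
  then have "domination_number V E \<le> card (V - D)" by (rule gamma_le)
  also have "\<dots> = card V - card D" using DV finD by (simp add: card_Diff_subset)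
  finally show ?thesis using D DV fin card_mono by fastforce
qed

lemma C4_deg:
  assumes c: "card V = 4"
    and two: "\<And>x. x \<in> V \<Longrightarrow> \<exists>u w. E x u \<and> E x w \<and> u \<noteq> w"
  shows "is_C4 V E"
proof -
  obtain a where a: "a \<in> V" using nonempty by auto
  obtain b d where bd: "E a b" "E a d" "b \<noteq> d" using two[OF a] by auto
  obtain c where cc: "c \<in> V" "c \<noteq> a" "\<not> E a c" using no_universal[OF a] by auto
  have bV: "b \<in> V" and dV: "d \<in> V" using bd inV by auto
  have dist: "distinct [a,b,c,d]" using bd cc irr by auto
  have "card {a,b,c,d} = 4" using dist by auto
  moreover have "{a,b,c,d} \<subseteq> V" using a bV dV cc by auto
  ultimately have V: "V = {a,b,c,d}" using c fin by (metis card_seteq order_refl)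
  obtain u w where uw: "E c u" "E c w" "u \<noteq> w" using two[OF cc(1)] by auto
  have "u \<in> V" "w \<in> V" using uw inV by auto
  then have "u \<in> {b,d}" "w \<in> {b,d}" using V uw irr sym cc by auto
  then have cb: "E c b" and cd: "E c d" using uw by auto
  obtain z where z: "z \<in> V" "z \<noteq> b" "\<not> E b z" using no_universal[OF bV] by auto
  have "z = d" using z V sym[OF bd(1)] sym[OF cb] by auto
  then have nbd: "\<not> E b d" using z by simp
  have "\<forall>x y. E x y \<longleftrightarrow> {x, y} \<in> {{a, b}, {b, c}, {c, d}, {d, a}}"
  proof (intro allI iffI)
    fix x y assume e: "E x y"
    have "x \<in> V" "y \<in> V" "x \<noteq> y" using e inV irr by auto
    then show "{x, y} \<in> {{a, b}, {b, c}, {c, d}, {d, a}}"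
      using V e cc(3) nbd sym by (auto simp: insert_commute)
  next
    fix x y assume "{x, y} \<in> {{a, b}, {b, c}, {c, d}, {d, a}}"
    then show "E x y" using bd cb cd sym by (auto simp: doubleton_eq_iff)
  qed
  then show ?thesis unfolding is_C4_def using dist V by blast
qed

end

context hg begin

lemma leaf_false:
  assumes l: "l \<in> V" "E l s" "\<And>u. E l u \<Longrightarrow> u = s"
    and eq: "2 * domination_number V E = card V"
  shows False
proof -
  define V' where "V' = V - {l}"
  define M where "M = closed_nbhd V' (del_edges E l)"
  obtain D where D: "efficient_dominating V' (del_edges E l) D" using delEDS[OF l(1)] V'_def by auto
  have DV': "D \<subseteq> V'" using D unfolding efficient_dominating_def by auto
  have finV': "finite V'" using fin V'_def by auto
  have finD: "finite D" using DV' finV' finite_subset by auto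
  have sV: "s \<in> V" "s \<noteq> l" using inV[OF l(2)] irr l(2) by auto
  have M: "M u = N u - {l}" if "u \<noteq> l" for u using cn_del[OF that] M_def V'_def by metis
  have finM: "finite (M u)" for u using finV' cn_sub M_def finite_subset by metis
  have Mmem: "x \<in> M u \<longleftrightarrow> x \<in> V \<and> x \<noteq> l \<and> (x = u \<or> E u x)" if "u \<noteq> l" for x u
    using M[OF that] cn_mem[of _ V E] by auto
  have own: "\<exists>d. M x \<inter> D = {d}" if "x \<in> V'" for x using eds_owner[OF D that] M_def by auto
  have selfown: "M d \<inter> D = {d}" if "d \<in> D" for d using eds_self[OF D that] M_def by auto
  have sum: "(\<Sum>d\<in>D. card (M d)) = card V'" using del_partition[of l D] D V'_def M_def by auto
  have cardV': "card V' = card V - 1" using l(1) fin V'_def by auto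
  have Nl: "N l = {l, s}"
  proof
    show "N l \<subseteq> {l, s}" using l(3) cn_mem[of _ V E l] by blast
    show "{l, s} \<subseteq> N l" using l(1,2) sV cn_mem[of _ V E l] by blast
  qed
  have lD: "l \<notin> D" using DV' V'_def by auto
  have sD: "s \<notin> D"
  proof
    assume "s \<in> D"
    then have "N l \<inter> D = {s}" using Nl lD by auto
    then have "card (N l \<inter> D) = 1" by simp
    moreover have "efficient_dominating (V - {l}) (del_edges E l) D" using D V'_def by simp
    ultimately show False using lift[OF l(1)] by blast
  qed
  have c2: "2 \<le> card (M d)" if dD: "d \<in> D" for d
  proof -
    have dl: "d \<noteq> l" and dV: "d \<in> V" using dD DV' V'_def by auto
    obtain u where u: "E d u" using no_isolated[OF dV] by auto
    have "u \<noteq> l" using u sym l(3) sD dD by metis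
    then have "{d, u} \<subseteq> M d" using Mmem[OF dl] u inV dV dl by auto
    moreover have "d \<noteq> u" using u irr by metis
    then have "card {d,u} = 2" by auto
    ultimately show ?thesis using finM by (metis card_mono)
  qed
  have k1: "2 * card D \<le> card V'"
  proof -
    have "(\<Sum>d\<in>D. 2) \<le> (\<Sum>d\<in>D. card (M d))" using c2 by (rule sum_mono)
    then show ?thesis using sum by simp
  qed
  have dom_own: "\<exists>d\<in>S. E x d" if "x \<in> V'" "x \<notin> D" "\<And>d. M x \<inter> D = {d} \<Longrightarrow> \<exists>d'\<in>S. E x d'" for x S
    using that own by blast
  have "dominating V E (insert l D)"
    unfolding dominating_def
  proof (intro conjI ballI)
    show "insert l D \<subseteq> V" using DV' l V'_def by auto
    fix x assume x: "x \<in> V - insert l D"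
    then have xl: "x \<noteq> l" by auto
    obtain d where d: "M x \<inter> D = {d}" using own x V'_def by auto
    then have "d \<noteq> x" "d \<in> M x" using x by auto
    then have "E x d" using Mmem[OF xl] by auto
    then show "\<exists>d\<in>insert l D. E x d" using d by auto
  qed
  then have "domination_number V E \<le> card (insert l D)" by (rule gamma_le)
  then have k2: "card V \<le> 2 * card D + 2" using eq finD lD by auto
  have cV1: "card V \<ge> 1" using l(1) fin card_0_eq by fastforce
  have k: "card V' = 2 * card D + 1" using k1 k2 eq cardV' cV1 by presburger
  have gk: "\<not> domination_number V E \<le> card D" using k eq cardV' by auto
  have sV': "s \<in> V'" using sV V'_def by auto
  obtain ds where ds: "M s \<inter> D = {ds}" using own[OF sV'] by auto
  have dsD: "ds \<in> D" and dss: "ds \<noteq> s" using ds sD by auto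
  have Esds: "E s ds" using ds Mmem[OF sV(2)] dss by auto
  have dsl: "ds \<noteq> l" using dsD lD by auto
  have sMds: "s \<in> M ds" using Mmem[OF dsl] sym[OF Esds] sV by auto
  obtain t where t: "t \<in> M ds" "t \<noteq> ds" "t \<noteq> s" "\<not> E t s"
  proof (rule ccontr)
    assume nt: "\<not> thesis"
    note th = that
    have allt: "t = ds \<or> t = s \<or> E t s" if tt: "t \<in> M ds" for t using nt th[of t] tt by blast
    have "dominating V E (insert s (D - {ds}))"
      unfolding dominating_def
    proof (intro conjI ballI)
      show "insert s (D - {ds}) \<subseteq> V" using DV' sV V'_def by auto
      fix x assume x: "x \<in> V - insert s (D - {ds})"
      show "\<exists>d\<in>insert s (D - {ds}). E x d"
      proof (cases "x = l \<or> x = ds")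
        case True then show ?thesis using l(2) sym[OF Esds] by auto
      next
        case False
        then have xl: "x \<noteq> l" and xds: "x \<noteq> ds" by auto
        have xD: "x \<notin> D" using x xds by auto
        obtain d where d: "M x \<inter> D = {d}" using own x xl V'_def by auto
        have dx: "d \<noteq> x" using d xD by auto
        have Exd: "E x d" using d dx Mmem[OF xl] by auto
        have dl: "d \<noteq> l" using d lD by auto
        have xMd: "x \<in> M d" using Mmem[OF dl] Mmem[OF xl] d sym[OF Exd] x xl by auto
        show ?thesis
        proof (cases "d = ds")
          case True
          then have "E x s" using allt[of x] xMd xds x by auto
          then show ?thesis by auto
        next
          case False then show ?thesis using d Exd by auto
        qed
      qed
    qed
    then have "domination_number V E \<le> card (insert s (D - {ds}))" by (rule gamma_le)
    also have "\<dots> \<le> card D"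
    proof -
      have "card (insert s (D - {ds})) \<le> card (D - {ds}) + 1" using finD by (simp add: card_insert_if)
      moreover have "card (D - {ds}) = card D - 1" using finD dsD by simp
      moreover have "card D \<ge> 1" using finD dsD by (metis One_nat_def Suc_leI card_gt_0_iff empty_iff)
      ultimately show ?thesis by linarith
    qed
    finally show False using gk by simp
  qed
  have tl: "t \<noteq> l" using t Mmem[OF dsl] by auto
  have Edst: "E ds t" using t Mmem[OF dsl] by auto
  have dsV: "ds \<in> V" using dsD DV' V'_def by auto
  have c3: "3 \<le> card (M ds)"
  proof -
    have "{ds, s, t} \<subseteq> M ds" using t sMds Mmem[OF dsl] dsD DV' V'_def by auto
    moreover have "card {ds, s, t} = 3" using t dss by auto
    ultimately show ?thesis using finM by (metis card_mono)
  qed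
  have sumrest: "(\<Sum>d\<in>D - {ds}. card (M d)) + card (M ds) = 2 * card D + 1"
    using sum k finD dsD by (metis add.commute sum.remove)
  have restge: "2 * (card D - 1) \<le> (\<Sum>d\<in>D - {ds}. card (M d))"
  proof -
    have "(\<Sum>d\<in>D - {ds}. 2) \<le> (\<Sum>d\<in>D - {ds}. card (M d))" using c2 by (intro sum_mono) auto
    then show ?thesis using finD dsD by simp
  qed
  have cD1: "1 \<le> card D" using finD dsD card_0_eq by fastforce
  have c3e: "card (M ds) = 3" using c3 sumrest restge cD1 by linarith
  have Mds: "M ds = {ds, s, t}"
  proof -
    have "{ds, s, t} \<subseteq> M ds" using t sMds Mmem[OF dsl] dsD DV' V'_def by auto
    moreover have "card {ds, s, t} = 3" using t dss by auto
    ultimately show ?thesis using finM c3e by (metis card_seteq order_refl)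
  qed
  have other2: "card (M d') = 2" if d': "d' \<in> D" "d' \<noteq> ds" for d'
  proof -
    have "(\<Sum>d\<in>D - {ds}. card (M d)) = card (M d') + (\<Sum>d\<in>D - {ds} - {d'}. card (M d))"
      by (rule sum.remove) (use finD d' in auto)
    moreover have "2 * (card D - 2) \<le> (\<Sum>d\<in>D - {ds} - {d'}. card (M d))"
    proof -
      have "(\<Sum>d\<in>D - {ds} - {d'}. 2) \<le> (\<Sum>d\<in>D - {ds} - {d'}. card (M d))" using c2 by (intro sum_mono) auto
      moreover have "card (D - {ds} - {d'}) = card D - 2" using finD d' dsD by auto
      ultimately show ?thesis by simp
    qed
    moreover have "2 \<le> card D"
    proof -
      have "card {ds, d'} \<le> card D" by (rule card_mono) (use finD d' dsD in auto)
      then show ?thesis using d' by simp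
    qed
    ultimately show ?thesis using c2[OF d'(1)] sumrest c3e by linarith
  qed
  have tleaf: "w = ds" if Etw: "E t w" for w
  proof (rule ccontr)
    assume wds: "w \<noteq> ds"
    have wV: "w \<in> V" using inV Etw by auto
    have wl: "w \<noteq> l" using Etw l(3) sym t(3) by metis
    have ws: "w \<noteq> s" using Etw t(4) by auto
    have wt: "w \<noteq> t" using Etw irr by auto
    obtain d' where d': "M w \<inter> D = {d'}" using own wV wl V'_def by auto
    have d'l: "d' \<noteq> l" using d' lD by auto
    have d'D: "d' \<in> D" using d' by auto
    have "d' = w \<or> E w d'" using d' Mmem[OF wl] by auto
    then have "d' = w \<or> E d' w" using sym by blast
    then have wMd': "w \<in> M d'" using Mmem[OF d'l] wV wl by auto
    have d'ds: "d' \<noteq> ds" using wMd' Mds wds ws wt by auto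
    have d'w: "d' \<noteq> w"
    proof
      assume "d' = w"
      then have "w \<in> M t \<inter> D" using Mmem[OF tl] Etw wV wl d'D by auto
      moreover have "ds \<in> M t \<inter> D" using Mmem[OF tl] sym[OF Edst] dsV dsl dsD by auto
      moreover have tV': "t \<in> V'" using tl t(1) Mmem[OF dsl] V'_def by auto
      moreover obtain e where "M t \<inter> D = {e}" using own[OF tV'] by blast
      ultimately show False using wds by auto
    qed
    have Md': "M d' = {d', w}"
    proof -
      have "{d', w} \<subseteq> M d'" using wMd' Mmem[OF d'l] d'D DV' V'_def by auto
      moreover have "card {d', w} = 2" using d'w by auto
      ultimately show ?thesis using finM other2[OF d'D d'ds] by (metis card_seteq order_refl)
    qed
    have Ed'w: "E d' w" using wMd' Mmem[OF d'l] d'w by auto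
    have "dominating V E (insert s (insert w (D - {ds, d'})))"
      unfolding dominating_def
    proof (intro conjI ballI)
      show "insert s (insert w (D - {ds, d'})) \<subseteq> V" using DV' sV wV V'_def by auto
      fix x assume x: "x \<in> V - insert s (insert w (D - {ds, d'}))"
      show "\<exists>d\<in>insert s (insert w (D - {ds, d'})). E x d"
      proof (cases "x = l \<or> x = ds \<or> x = t \<or> x = d'")
        case True then show ?thesis using l(2) sym[OF Esds] Etw Ed'w by auto
      next
        case False
        then have xl: "x \<noteq> l" and xo: "x \<noteq> ds" "x \<noteq> t" "x \<noteq> d'" by auto
        have xD: "x \<notin> D" using x xo by auto
        obtain d where d: "M x \<inter> D = {d}" using own x xl V'_def by auto
        have dx: "d \<noteq> x" using d xD by auto
        have Exd: "E x d" using d dx Mmem[OF xl] by auto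
        have dl: "d \<noteq> l" using d lD by auto
        have xMd: "x \<in> M d" using Mmem[OF dl] Mmem[OF xl] d sym[OF Exd] x xl by auto
        have "d \<noteq> ds" using xMd Mds xo x by auto
        moreover have "d \<noteq> d'" using xMd Md' xo x by auto
        ultimately show ?thesis using d Exd by auto
      qed
    qed
    then have "domination_number V E \<le> card (insert s (insert w (D - {ds, d'})))" by (rule gamma_le)
    also have "\<dots> \<le> card D"
    proof -
      have "card (insert s (insert w (D - {ds, d'}))) \<le> card (D - {ds, d'}) + 2"
        using finD by (simp add: card_insert_if)
      moreover have "card (D - {ds, d'}) = card D - 2" using finD dsD d'D d'ds by auto
      moreover have "2 \<le> card D"
      proof -
        have "card {ds, d'} \<le> card D" by (rule card_mono) (use finD d'D dsD in auto)
        then show ?thesis using d'ds by simp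
      qed
      ultimately show ?thesis by linarith
    qed
    finally show False using gk by simp
  qed
  define X where "X = insert t (D - {ds})"
  define D2 where "D2 = insert l X"
  have tD: "t \<notin> D" using t(1,2) selfown[OF dsD] by auto
  have tV: "t \<in> V" using t(1) Mmem[OF dsl] by auto
  have Est: "\<not> E s t" using t(4) sym by blast
  have lX: "l \<notin> X" unfolding X_def using tl lD by auto
  have sX: "s \<notin> X" unfolding X_def using t(3) sD by auto
  have "efficient_dominating V E D2"
    unfolding efficient_dominating_def
  proof (intro conjI ballI)
    show "D2 \<subseteq> V" using DV' l(1) tV V'_def unfolding D2_def X_def by auto
    fix x assume xV: "x \<in> V"
    have "\<exists>e. N x \<inter> D2 = {e}"
    proof (cases "x = l")
      case True
      have "N l \<inter> D2 = {l}" unfolding Nl D2_def using sX sV(2) by auto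
      then show ?thesis using True by blast
    next
      case xl: False
      have lN: "l \<in> N x \<longleftrightarrow> E x l" using cn_mem[of l V E x] l(1) xl by auto
      have spl: "N x \<inter> D2 = (if E x l then {l} else {}) \<union> (M x \<inter> X)"
        using lN lX M[OF xl] unfolding D2_def by auto
      show ?thesis
      proof (cases "x = s")
        case True
        have "t \<notin> M s" using Mmem[OF sV(2)] Est t(3) by auto
        moreover have "M s \<inter> (D - {ds}) = {}" using ds by auto
        ultimately have "M s \<inter> X = {}" unfolding X_def by auto
        then have "N x \<inter> D2 = {l}" using spl True sym[OF l(2)] by auto
        then show ?thesis by blast
      next
        case xs: False
        have xnl: "\<not> E x l" using sym l(3) xs by metis
        then have spl2: "N x \<inter> D2 = M x \<inter> X" using spl by simp
        show ?thesis
        proof (cases "x = ds")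
          case True
          have "M ds \<inter> X = {t}" unfolding Mds X_def using sD t(2,3) dss by auto
          then have "N x \<inter> D2 = {t}" using spl2 True by simp
          then show ?thesis by blast
        next
          case xds: False
          show ?thesis
          proof (cases "x = t")
            case True
            have "M t \<subseteq> {t, ds}"
            proof
              fix y assume "y \<in> M t"
              then have "y = t \<or> E t y" using Mmem[OF tl] by auto
              then have "y = t \<or> y = ds" using tleaf[of y] by blast
              then show "y \<in> {t, ds}" by simp
            qed
            moreover have "t \<in> M t" using M[OF tl] cn_self[of t V E] tV tl by blast
            ultimately have "M t \<inter> X = {t}" unfolding X_def by auto
            then have "N x \<inter> D2 = {t}" using spl2 True by simp
            then show ?thesis by blast
          next
            case xt: False
            obtain d where d: "M x \<inter> D = {d}" using own xV xl V'_def by auto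
            have dl: "d \<noteq> l" using d lD by auto
            have "d = x \<or> E x d" using d Mmem[OF xl] by auto
            then have "d = x \<or> E d x" using sym[of x d] by blast
            then have "x \<in> M d" using Mmem[OF dl] xV xl by auto
            then have dds: "d \<noteq> ds" using Mds xs xds xt by auto
            have nEtx: "\<not> E t x" using tleaf[of x] xds by blast
            have "t \<notin> M x"
            proof
              assume "t \<in> M x"
              then have "t = x \<or> E x t" using Mmem[OF xl] by simp
              then show False using xt sym[of x t] nEtx by blast
            qed
            then have "M x \<inter> X = (M x \<inter> D) - {ds}" unfolding X_def by blast
            also have "\<dots> = {d}" using d dds by simp
            finally have "M x \<inter> X = {d}" .
            then have "N x \<inter> D2 = {d}" using spl2 by simp
            then show ?thesis by blast
          qed
        qed
      qed
    qed
    then show "card (N x \<inter> D2) = 1" by auto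
  qed
  then show False using noEDS by blast
qed

end

context hg begin

lemma eq_C4:
  assumes eq: "2 * domination_number V E = card V"
  shows "is_C4 V E"
proof -
  have nl: "\<exists>u. E l u \<and> u \<noteq> s" if "l \<in> V" "E l s" for l s
    using leaf_false[OF that _ eq] by blast
  have two: "\<exists>u w. E x u \<and> E x w \<and> u \<noteq> w" if x: "x \<in> V" for x
  proof -
    obtain u where "E x u" using no_isolated[OF x] by auto
    then show ?thesis using nl[OF x] by blast
  qed
  obtain v where v: "v \<in> V" using nonempty by auto
  define V' where "V' = V - {v}"
  define M where "M = closed_nbhd V' (del_edges E v)"
  obtain D where D: "efficient_dominating V' (del_edges E v) D" using delEDS[OF v] V'_def by auto
  have DV': "D \<subseteq> V'" using D unfolding efficient_dominating_def by auto
  have finV': "finite V'" using fin V'_def by auto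
  have finD: "finite D" using DV' finV' finite_subset by auto
  have M: "M u = N u - {v}" if "u \<noteq> v" for u using cn_del[OF that] M_def V'_def by metis
  have finM: "finite (M u)" for u using finV' cn_sub M_def finite_subset by metis
  have Mmem: "x \<in> M u \<longleftrightarrow> x \<in> V \<and> x \<noteq> v \<and> (x = u \<or> E u x)" if "u \<noteq> v" for x u
    using M[OF that] cn_mem[of _ V E] by auto
  have own: "\<exists>d. M x \<inter> D = {d}" if "x \<in> V'" for x using eds_owner[OF D that] M_def by auto
  have sum: "(\<Sum>d\<in>D. card (M d)) = card V'" using del_partition[of v D] D V'_def M_def by auto
  have cardV': "card V' = card V - 1" using v fin V'_def by auto
  have vD: "v \<notin> D" using DV' V'_def by auto
  have n4: "card V \<ge> 4" by (rule card4)
  have c2: "2 \<le> card (M d)" if dD: "d \<in> D" for d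
  proof -
    have dl: "d \<noteq> v" and dV: "d \<in> V" using dD DV' V'_def by auto
    obtain u w where uw: "E d u" "E d w" "u \<noteq> w" using two[OF dV] by auto
    obtain z where z: "E d z" "z \<noteq> v" using uw by auto
    then have "{d, z} \<subseteq> M d" using Mmem[OF dl] inV dV dl by auto
    moreover have "d \<noteq> z" using z(1) irr by metis
    then have "card {d,z} = 2" by auto
    ultimately show ?thesis using finM by (metis card_mono)
  qed
  have k1: "2 * card D \<le> card V'"
  proof -
    have "(\<Sum>d\<in>D. 2) \<le> (\<Sum>d\<in>D. card (M d))" using c2 by (rule sum_mono)
    then show ?thesis using sum by simp
  qed
  have domD: "\<exists>d\<in>D. E x d" if xx: "x \<in> V" "x \<noteq> v" "x \<notin> D" for x
  proof -
    obtain d where d: "M x \<inter> D = {d}" using own xx V'_def by auto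
    then have "d \<noteq> x" "d \<in> M x" using xx by auto
    then have "E x d" using Mmem[OF xx(2)] by auto
    then show ?thesis using d by auto
  qed
  have nvd: "\<not> E v d" if "d \<in> D" for d
  proof
    assume Evd: "E v d"
    have "card (N v \<inter> D) \<noteq> 1" using lift[OF v] D V'_def by auto
    have "dominating V E D"
      unfolding dominating_def
    proof (intro conjI ballI)
      show "D \<subseteq> V" using DV' V'_def by auto
      fix x assume x: "x \<in> V - D"
      show "\<exists>d\<in>D. E x d"
      proof (cases "x = v")
        case True then show ?thesis using Evd that by auto
      next
        case False then show ?thesis using domD x by auto
      qed
    qed
    then have "domination_number V E \<le> card D" by (rule gamma_le)
    then show False using eq k1 cardV' n4 by linarith
  qed
  have c3: "3 \<le> card (M d)" if dD: "d \<in> D" for d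
  proof -
    have dl: "d \<noteq> v" and dV: "d \<in> V" using dD DV' V'_def by auto
    obtain u w where uw: "E d u" "E d w" "u \<noteq> w" using two[OF dV] by auto
    have "u \<noteq> v" "w \<noteq> v" using uw nvd[OF dD] sym by auto
    then have "{d, u, w} \<subseteq> M d" using Mmem[OF dl] inV uw dV dl by auto
    moreover have "d \<noteq> u" "d \<noteq> w" using uw irr by metis+
    then have "card {d,u,w} = 3" using uw by auto
    ultimately show ?thesis using finM by (metis card_mono)
  qed
  have k3: "3 * card D \<le> card V'"
  proof -
    have "(\<Sum>d\<in>D. 3) \<le> (\<Sum>d\<in>D. card (M d))" using c3 by (rule sum_mono)
    then show ?thesis using sum by simp
  qed
  have "dominating V E (insert v D)"
    unfolding dominating_def
  proof (intro conjI ballI)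
    show "insert v D \<subseteq> V" using DV' v V'_def by auto
    fix x assume x: "x \<in> V - insert v D"
    then show "\<exists>d\<in>insert v D. E x d" using domD by auto
  qed
  then have "domination_number V E \<le> card (insert v D)" by (rule gamma_le)
  then have k2: "card V \<le> 2 * card D + 2" using eq finD vD by auto
  have c4: "card V = 4" using k2 k3 cardV' n4 by linarith
  show ?thesis by (rule C4_deg[OF c4 two])
qed

end

context hg begin
lemma C4_gamma:
  assumes "is_C4 V E"
  shows "2 * domination_number V E = card V"
proof -
  obtain a b c d where abcd: "distinct [a, b, c, d]" "V = {a, b, c, d}"
    and Ed: "\<forall>x y. E x y \<longleftrightarrow> {x, y} \<in> {{a, b}, {b, c}, {c, d}, {d, a}}"
    using assms unfolding is_C4_def by blast
  have cV: "card V = 4" using abcd by auto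
  have Eba: "E b a" using Ed by (auto simp: insert_commute)
  have Eda: "E d a" using Ed by auto
  have "dominating V E {a, c}"
    unfolding dominating_def using abcd Eba Eda by auto
  then have "domination_number V E \<le> card {a, c}" by (rule gamma_le)
  then have "domination_number V E \<le> 2" using abcd by auto
  then show ?thesis using gamma_ge2 cV by linarith
qed
end

theorem proposition3p8:
  fixes V :: "'a set" and E :: "'a \<Rightarrow> 'a \<Rightarrow> bool"
  assumes "simple_graph V E" and "hypo_efficient V E"
  shows "connected_graph V E \<and> card V \<ge> 4
    \<and> 2 \<le> domination_number V E \<and> 2 * domination_number V E \<le> card V
    \<and> (2 * domination_number V E = card V \<longleftrightarrow> is_C4 V E)"
proof -
  interpret hg V E using assms by unfold_locales
  show ?thesis using connected card4 gamma_ge2 ore eq_C4 C4_gamma by blast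
qed

end
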